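(* There exists a function $f:\mathbb{N}\to\mathbb{N}$ such that for every natural number $k$, no $k$-modular permutation graph contains an induced path with more than $f(k)$ vertices.
   Context: A permutation graph is the intersection graph of the line segments of a permutation diagram: two parallel horizontal lines, points labelled $1,\ldots,n$ on each, and a segment joining the two points with the same label. A module of a graph $G=(V,E)$ is a set $M\subseteq V$ such that every vertex outside $M$ is adjacent either to all vertices of $M$ or to none of them. A module is strong if it does not overlap any other module. The strong modules form the modular decomposition tree of $G$: each internal node $N$ has as children its maximal proper strong submodules $M_1,\ldots,M_m$, with quotient graph $H_N$ on $\{M_1,\ldots,M_m\}$ where $M_i\sim M_j$ iff all edges between $M_i$ and $M_j$ are present; $N$ is a prime node if $H_N$ is neither edgeless nor complete. A graph is $k$-modular if for every prime node $N$ the quotient graph $H_N$ has at most $k$ vertices. *)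

theory Defs
  imports Main
begin

definition sgraph :: "'a set \<Rightarrow> ('a \<Rightarrow> 'a \<Rightarrow> bool) \<Rightarrow> bool" where
  "sgraph V E \<longleftrightarrow> finite V \<and> (\<forall>u v. E u v \<longrightarrow> u \<in> V \<and> v \<in> V \<and> u \<noteq> v \<and> E v u)"

text \<open>Vertex v is
  the segment joining position p v on the top line to position q v on the bottom line
  (distinct positions on each line); two segments intersect iff they cross.\<close>
definition permutation_graph :: "'a set \<Rightarrow> ('a \<Rightarrow> 'a \<Rightarrow> bool) \<Rightarrow> bool" where
  "permutation_graph V E \<longleftrightarrow>
     (\<exists>(p :: _ \<Rightarrow> nat) (q :: _ \<Rightarrow> nat). inj_on p V \<and> inj_on q V \<and>
        (\<forall>u\<in>V. \<forall>v\<in>V. u \<noteq> v \<longrightarrow> (E u v \<longleftrightarrow> ((p u < p v) \<noteq> (q u < q v)))))"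

definition is_module :: "'a set \<Rightarrow> ('a \<Rightarrow> 'a \<Rightarrow> bool) \<Rightarrow> 'a set \<Rightarrow> bool" where
  "is_module V E M \<longleftrightarrow> M \<noteq> {} \<and> M \<subseteq> V \<and>
     (\<forall>x \<in> V - M. (\<forall>m\<in>M. E x m) \<or> (\<forall>m\<in>M. \<not> E x m))"

definition overlap :: "'a set \<Rightarrow> 'a set \<Rightarrow> bool" where
  "overlap A B \<longleftrightarrow> A \<inter> B \<noteq> {} \<and> \<not> A \<subseteq> B \<and> \<not> B \<subseteq> A"

definition strong_module :: "'a set \<Rightarrow> ('a \<Rightarrow> 'a \<Rightarrow> bool) \<Rightarrow> 'a set \<Rightarrow> bool" where
  "strong_module V E M \<longleftrightarrow> is_module V E M \<and> (\<forall>M'. is_module V E M' \<longrightarrow> \<not> overlap M M')"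

definition md_children :: "'a set \<Rightarrow> ('a \<Rightarrow> 'a \<Rightarrow> bool) \<Rightarrow> 'a set \<Rightarrow> 'a set set" where
  "md_children V E N = {M. strong_module V E M \<and> M \<subset> N \<and>
       \<not> (\<exists>M'. strong_module V E M' \<and> M \<subset> M' \<and> M' \<subset> N)}"

definition quotient_adj :: "('a \<Rightarrow> 'a \<Rightarrow> bool) \<Rightarrow> 'a set \<Rightarrow> 'a set \<Rightarrow> bool" where
  "quotient_adj E M1 M2 \<longleftrightarrow> (\<forall>x\<in>M1. \<forall>y\<in>M2. E x y)"

text \<open>Prime node: an internal node (strong module with at least two vertices) whose
  quotient graph is neither edgeless nor complete.\<close>
definition prime_node :: "'a set \<Rightarrow> ('a \<Rightarrow> 'a \<Rightarrow> bool) \<Rightarrow> 'a set \<Rightarrow> bool" where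
  "prime_node V E N \<longleftrightarrow> strong_module V E N \<and> card N \<ge> 2 \<and>
     (\<exists>M1\<in>md_children V E N. \<exists>M2\<in>md_children V E N. M1 \<noteq> M2 \<and> quotient_adj E M1 M2) \<and>
     (\<exists>M1\<in>md_children V E N. \<exists>M2\<in>md_children V E N. M1 \<noteq> M2 \<and> \<not> quotient_adj E M1 M2)"

definition k_modular :: "nat \<Rightarrow> 'a set \<Rightarrow> ('a \<Rightarrow> 'a \<Rightarrow> bool) \<Rightarrow> bool" where
  "k_modular k V E \<longleftrightarrow> (\<forall>N. prime_node V E N \<longrightarrow> card (md_children V E N) \<le> k)"

definition induced_path :: "'a set \<Rightarrow> ('a \<Rightarrow> 'a \<Rightarrow> bool) \<Rightarrow> 'a list \<Rightarrow> bool" where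
  "induced_path V E xs \<longleftrightarrow> distinct xs \<and> set xs \<subseteq> V \<and>
     (\<forall>i<length xs. \<forall>j<length xs. i < j \<longrightarrow> (E (xs ! i) (xs ! j) \<longleftrightarrow> j = i + 1))"

end

theory Submission
  imports Defs
begin

lemma idx_module:
  fixes I :: "nat set"
  assumes sub: "I \<subseteq> {..<n}" and n4: "4 \<le> n" and ab: "a\<in>I" "b\<in>I" "a\<noteq>b"
  and md: "\<And>j. j<n \<Longrightarrow> j\<notin>I \<Longrightarrow> (\<forall>i\<in>I. i+1=j \<or> j+1=i) \<or> (\<forall>i\<in>I. \<not>(i+1=j \<or> j+1=i))"
  shows "I = {..<n}"
proof (rule ccontr)
  assume ne: "I \<noteq> {..<n}"
  have "\<exists>t. Suc t < n \<and> (t\<in>I) \<noteq> (Suc t \<in> I)"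
  proof (rule ccontr)
    assume "\<not> ?thesis"
    hence st: "\<And>t. Suc t < n \<Longrightarrow> (t\<in>I) = (Suc t \<in> I)" by blast
    have *: "t<n \<Longrightarrow> (t\<in>I) = (0\<in>I)" for t
    proof (induction t)
      case 0 thus ?case by simp
    next
      case (Suc t) thus ?case using st[of t] by simp
    qed
    have "a < n" using ab sub by auto
    hence "0 \<in> I" using *[of a] ab by simp
    hence "\<forall>t<n. t \<in> I" using * by blast
    thus False using ne sub by auto
  qed
  then obtain t where t: "Suc t < n" "(t\<in>I) \<noteq> (Suc t \<in> I)" by blast
  show False
  proof (cases "t \<in> I")
    case True
    hence nI: "Suc t \<notin> I" using t by auto
    have "\<not> (\<forall>i\<in>I. \<not>(i+1=Suc t \<or> Suc t+1=i))" using True by auto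
    hence all: "\<forall>i\<in>I. i+1 = Suc t \<or> Suc t + 1 = i" using md[OF t(1) nI] by blast
    have sub2: "I \<subseteq> {t, t+2}"
    proof
      fix i assume "i \<in> I" thus "i \<in> {t,t+2}" using all by auto
    qed
    have I2: "t+2 \<in> I"
    proof (rule ccontr)
      assume "t+2 \<notin> I" hence "I \<subseteq> {t}" using sub2 by auto
      thus False using ab by auto
    qed
    show False
    proof (cases "t \<ge> 1")
      case True
      have "t-1 < n" "t-1 \<notin> I" using t sub2 True by auto
      from md[OF this] have "(\<forall>i\<in>I. i+1=t-1 \<or> t-1+1=i) \<or> (\<forall>i\<in>I. \<not>(i+1=t-1 \<or> t-1+1=i))" .
      moreover have "\<not> (t+2+1=t-1 \<or> t-1+1=t+2)" using True by arith
      moreover have "t-1+1 = t" using True by arith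
      ultimately show False using I2 \<open>t\<in>I\<close> by blast
    next
      case False
      hence "t = 0" by auto
      have "3 < n" "3 \<notin> I" using n4 sub2 \<open>t=0\<close> by auto
      from md[OF this] I2 \<open>t\<in>I\<close> \<open>t=0\<close> show False by auto
    qed
  next
    case False
    hence nI: "t \<notin> I" and sI: "Suc t \<in> I" using t by auto
    have "\<not> (\<forall>i\<in>I. \<not>(i+1=t \<or> t+1=i))" using sI by auto
    hence all: "\<forall>i\<in>I. i+1 = t \<or> t + 1 = i" using md[OF _ nI] t by auto
    have t1: "t \<ge> 1"
    proof (rule ccontr)
      assume "\<not> t \<ge> 1" hence "t = 0" by simp
      hence "I \<subseteq> {1}" using all by auto
      thus False using ab by auto
    qed
    have sub2: "I \<subseteq> {t-1, t+1}"
    proof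
      fix i assume "i \<in> I" thus "i \<in> {t-1,t+1}" using all by auto
    qed
    have I2: "t-1 \<in> I"
    proof (rule ccontr)
      assume "t-1 \<notin> I" hence "I \<subseteq> {t+1}" using sub2 by auto
      thus False using ab by auto
    qed
    show False
    proof (cases "t + 2 < n")
      case True
      have "t+2 \<notin> I" using sub2 t1 by auto
      from md[OF True this] have "(\<forall>i\<in>I. i+1=t+2 \<or> t+2+1=i) \<or> (\<forall>i\<in>I. \<not>(i+1=t+2 \<or> t+2+1=i))" .
      moreover have "\<not> (t-1+1=t+2 \<or> t+2+1=t-1)" using t1 by arith
      ultimately show False using I2 sI by auto
    next
      case False
      hence tn: "t + 2 = n" using t by arith
      have "t - 2 < n" "t-2 \<notin> I" using tn sub2 n4 by auto
      from md[OF this] have "(\<forall>i\<in>I. i+1=t-2 \<or> t-2+1=i) \<or> (\<forall>i\<in>I. \<not>(i+1=t-2 \<or> t-2+1=i))" .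
      moreover have "t-2+1 = t-1" "\<not>(t+1+1 = t-2 \<or> t-2+1 = t+1)" using tn n4 by arith+
      ultimately show False using I2 sI by auto
    qed
  qed
qed

lemma strong_sub: "strong_module V E M \<Longrightarrow> M \<subseteq> V"
  unfolding strong_module_def is_module_def by blast

lemma singleton_strong:
  assumes "v \<in> V" shows "strong_module V E {v}"
  using assms unfolding strong_module_def is_module_def overlap_def by auto

lemma child_exists:
  assumes g: "sgraph V E" and N: "strong_module V E N" and v: "v \<in> N" and ne: "N \<noteq> {v}"
  shows "\<exists>M\<in>md_children V E N. v\<in>M"
proof -
  have NV: "N \<subseteq> V" using N unfolding strong_module_def is_module_def by auto
  define T where "T = {M. strong_module V E M \<and> v \<in> M \<and> M \<subset> N}"
  have fin: "finite T"
  proof (rule finite_subset[of _ "Pow V"])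
    show "T \<subseteq> Pow V" using NV unfolding T_def by blast
    show "finite (Pow V)" using g unfolding sgraph_def by simp
  qed
  have "{v} \<subset> N" using v ne by blast
  moreover have "strong_module V E {v}" using singleton_strong[of v V E] v NV by blast
  ultimately have "{v} \<in> T" unfolding T_def by blast
  hence "T \<noteq> {}" by blast
  from finite_has_maximal[OF fin this] obtain M where M: "M \<in> T"
    and mx: "\<And>b. b\<in>T \<Longrightarrow> M \<subseteq> b \<Longrightarrow> M = b" by blast
  have Ms: "strong_module V E M" "M \<subset> N" "v \<in> M" using M unfolding T_def by blast+
  have "M \<in> md_children V E N"
    unfolding md_children_def
  proof (intro CollectI conjI notI)
    show "strong_module V E M" "M \<subset> N" using Ms by blast+
    assume "\<exists>M'. strong_module V E M' \<and> M \<subset> M' \<and> M' \<subset> N"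
    then obtain M' where M': "strong_module V E M'" "M \<subset> M'" "M' \<subset> N" by blast
    hence "M' \<in> T" using Ms unfolding T_def by blast
    from mx[OF this] M'(2) show False by blast
  qed
  thus ?thesis using Ms by blast
qed
lemma children_disjoint:
  assumes "M1 \<in> md_children V E N" "M2 \<in> md_children V E N" "M1 \<noteq> M2"
  shows "M1 \<inter> M2 = {}"
proof (rule ccontr)
  assume "M1 \<inter> M2 \<noteq> {}"
  moreover have "\<not> overlap M1 M2" using assms unfolding md_children_def strong_module_def by auto
  ultimately have "M1 \<subseteq> M2 \<or> M2 \<subseteq> M1" unfolding overlap_def by auto
  thus False using assms unfolding md_children_def by auto
qed

lemma path_adj:
  assumes g: "sgraph V E" and p: "induced_path V E xs" and "i < length xs" "j < length xs" "i \<noteq> j"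
  shows "E (xs!i) (xs!j) \<longleftrightarrow> (i+1=j \<or> j+1=i)"
proof -
  have sym: "\<And>u v. E u v \<Longrightarrow> E v u" using g unfolding sgraph_def by auto
  have pp: "\<And>i j. i<length xs \<Longrightarrow> j<length xs \<Longrightarrow> i<j \<Longrightarrow> E (xs!i) (xs!j) \<longleftrightarrow> j = i+1"
    using p unfolding induced_path_def by auto
  show ?thesis
  proof (cases "i < j")
    case True thus ?thesis using pp[of i j] assms by auto
  next
    case False
    hence "j < i" using assms by auto
    thus ?thesis using pp[of j i] assms sym by auto
  qed
qed

theorem mainTheorem18:
  shows "\<exists>f :: nat \<Rightarrow> nat. \<forall>k (V :: nat set) E xs.
           sgraph V E \<and> permutation_graph V E \<and> k_modular k V E \<and> induced_path V E xs
           \<longrightarrow> length xs \<le> f k"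
proof (intro exI allI impI)
  fix k and V :: "nat set" and E xs
  assume A: "sgraph V E \<and> permutation_graph V E \<and> k_modular k V E \<and> induced_path V E xs"
  hence g: "sgraph V E" and km: "k_modular k V E" and p: "induced_path V E xs" by auto
  define n where "n = length xs"
  show "length xs \<le> k + 3"
  proof (rule ccontr)
    assume "\<not> ?thesis"
    hence n4: "4 \<le> n" unfolding n_def by auto
    have finV: "finite V" using g unfolding sgraph_def by auto
    have dist: "distinct xs" and PV: "set xs \<subseteq> V" using p unfolding induced_path_def by auto
    have sym: "\<And>u v. E u v \<Longrightarrow> E v u" using g unfolding sgraph_def by auto
    have adj: "\<And>i j. i<n \<Longrightarrow> j<n \<Longrightarrow> i\<noteq>j \<Longrightarrow> E (xs!i) (xs!j) \<longleftrightarrow> (i+1=j \<or> j+1=i)"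
      using path_adj[OF g p] unfolding n_def by auto
    have Vne: "V \<noteq> {}" using PV n4 n_def by (cases xs) auto
    have Vs: "strong_module V E V"
    proof -
      have "is_module V E V" using Vne unfolding is_module_def by blast
      moreover have "\<forall>M'. is_module V E M' \<longrightarrow> \<not> overlap V M'"
        unfolding is_module_def overlap_def by blast
      ultimately show ?thesis unfolding strong_module_def by blast
    qed
    define S where "S = {M. strong_module V E M \<and> set xs \<subseteq> M}"
    have finS: "finite S"
      by (rule finite_subset[of _ "Pow V"]) (use strong_sub finV in \<open>auto simp: S_def\<close>)
    have "V \<in> S" using Vs PV unfolding S_def by blast
    hence "S \<noteq> {}" by blast
    from finite_has_minimal[OF finS this] obtain N where NS: "N \<in> S"
      and mn0: "\<forall>b\<in>S. b \<subseteq> N \<longrightarrow> N = b" by (elim bexE)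
    have mn: "\<And>b. b\<in>S \<Longrightarrow> b \<subseteq> N \<Longrightarrow> N = b" using mn0 by blast
    have Nstr: "strong_module V E N" and PN: "set xs \<subseteq> N" using NS unfolding S_def by blast+
    have NV: "N \<subseteq> V" using Nstr by (rule strong_sub)
    have cardP: "card (set xs) = n" using dist distinct_card n_def by auto
    have "\<forall>i<n. \<exists>M\<in>md_children V E N. xs!i \<in> M"
    proof (intro allI impI)
      fix i assume i: "i < n"
      have xi: "xs!i \<in> N" using PN i n_def by auto
      have "N \<noteq> {xs!i}"
      proof
        assume "N = {xs!i}"
        hence "card (set xs) \<le> card {xs!i}" using PN by (intro card_mono) auto
        hence "card (set xs) \<le> 1" by simp
        thus False using cardP n4 by auto
      qed
      from child_exists[OF g Nstr xi this] show "\<exists>M\<in>md_children V E N. xs!i \<in> M" .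
    qed
    then obtain C where C: "\<And>i. i<n \<Longrightarrow> C i \<in> md_children V E N \<and> xs!i \<in> C i" by metis
    have Cinj: "\<And>i j. i<n \<Longrightarrow> j<n \<Longrightarrow> i \<noteq> j \<Longrightarrow> xs!j \<notin> C i"
    proof
      fix i j assume ij: "i<n" "j<n" "i\<noteq>j" and xj: "xs!j \<in> C i"
      define M where "M = C i"
      have Mc: "M \<in> md_children V E N" and xi: "xs!i \<in> M" using C[OF ij(1)] unfolding M_def by blast+
      have Mstr: "strong_module V E M" and MN: "M \<subset> N" using Mc unfolding md_children_def by blast+
      have Mmod: "is_module V E M" using Mstr unfolding strong_module_def by blast
      define I where "I = {t. t<n \<and> xs!t \<in> M}"
      have "I = {..<n}"
      proof (rule idx_module[OF _ n4, where a=i and b=j])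
        show "I \<subseteq> {..<n}" unfolding I_def by blast
        show "i \<in> I" using ij xi unfolding I_def by blast
        show "j \<in> I" using ij xj unfolding I_def M_def by blast
        show "i\<noteq>j" by fact
        fix t assume t: "t < n" "t \<notin> I"
        hence "xs!t \<notin> M" unfolding I_def by blast
        moreover have "xs!t \<in> V" using PV t(1) unfolding n_def by (meson nth_mem subsetD)
        ultimately have tV: "xs!t \<in> V - M" by blast
        from Mmod tV have "(\<forall>m\<in>M. E (xs!t) m) \<or> (\<forall>m\<in>M. \<not> E (xs!t) m)"
          unfolding is_module_def by blast
        thus "(\<forall>s\<in>I. s+1=t \<or> t+1=s) \<or> (\<forall>s\<in>I. \<not>(s+1=t \<or> t+1=s))"
        proof
          assume h: "\<forall>m\<in>M. E (xs!t) m"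
          have "\<forall>s\<in>I. s+1=t \<or> t+1=s"
          proof
            fix s assume s: "s \<in> I"
            hence st: "s \<noteq> t" "s < n" "xs!s \<in> M" using t unfolding I_def by blast+
            hence "E (xs!t) (xs!s)" using h by blast
            thus "s+1=t \<or> t+1=s" using adj[of t s] st t(1) by presburger
          qed
          thus ?thesis by blast
        next
          assume h: "\<forall>m\<in>M. \<not> E (xs!t) m"
          have "\<forall>s\<in>I. \<not>(s+1=t \<or> t+1=s)"
          proof
            fix s assume s: "s \<in> I"
            hence st: "s \<noteq> t" "s < n" "xs!s \<in> M" using t unfolding I_def by blast+
            hence "\<not> E (xs!t) (xs!s)" using h by blast
            thus "\<not>(s+1=t \<or> t+1=s)" using adj[of t s] st t(1) by presburger
          qed
          thus ?thesis by blast
        qed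
      qed
      hence Iall: "\<And>t. t < n \<Longrightarrow> xs!t \<in> M" unfolding I_def by blast
      have "set xs \<subseteq> M"
      proof
        fix x assume "x \<in> set xs"
        then obtain t where "t < length xs" "xs!t = x" by (meson in_set_conv_nth)
        thus "x \<in> M" using Iall[of t] unfolding n_def by blast
      qed
      hence "M \<in> S" using Mstr unfolding S_def by blast
      from mn[OF this] MN show False by blast
    qed
    have Cinj2: "inj_on C {..<n}"
    proof (rule inj_onI)
      fix i j assume "i \<in> {..<n}" "j \<in> {..<n}" "C i = C j"
      thus "i = j" using Cinj[of i j] C[of j] by auto
    qed
    have finCh: "finite (md_children V E N)"
      by (rule finite_subset[of _ "Pow V"]) (use strong_sub finV in \<open>auto simp: md_children_def\<close>)
    have "card {..<n} \<le> card (md_children V E N)"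
      by (rule card_inj_on_le[OF Cinj2 _ finCh]) (use C in auto)
    hence nle: "n \<le> card (md_children V E N)" by simp
    have dis: "\<And>i j. i<n \<Longrightarrow> j<n \<Longrightarrow> i\<noteq>j \<Longrightarrow> C i \<noteq> C j"
      using Cinj C by blast
    have "prime_node V E N"
      unfolding prime_node_def
    proof (intro conjI)
      show "strong_module V E N" by fact
      have "n \<le> card N" using cardP card_mono[OF finite_subset[OF NV finV] PN] by auto
      thus "2 \<le> card N" using n4 by auto
      have c0: "C 0 \<in> md_children V E N" "xs!0 \<in> C 0" and c1: "C 1 \<in> md_children V E N" "xs!1 \<in> C 1"
        and c2: "C 2 \<in> md_children V E N" "xs!2 \<in> C 2" using C n4 by auto
      have d01: "C 0 \<noteq> C 1" and d02: "C 0 \<noteq> C 2" using dis n4 by auto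
      have e01: "E (xs!0) (xs!1)" and ne02: "\<not> E (xs!0) (xs!2)" using adj n4 by auto
      have M0: "is_module V E (C 0)" and M1: "is_module V E (C 1)"
        using c0 c1 unfolding md_children_def strong_module_def by auto
      have disj: "C 0 \<inter> C 1 = {}" using children_disjoint[OF c0(1) c1(1) d01] .
      have C0V: "C 0 \<subseteq> V" and C1V: "C 1 \<subseteq> V" using M0 M1 unfolding is_module_def by auto
      have x1: "xs!1 \<in> V - C 0" using disj c1 C1V by auto
      have "\<forall>m\<in>C 0. E (xs!1) m" using M0 x1 c0 sym[OF e01] unfolding is_module_def by blast
      hence a1: "\<forall>m\<in>C 0. E m (xs!1)" using sym by blast
      have "quotient_adj E (C 0) (C 1)"
        unfolding quotient_adj_def
      proof (intro ballI)
        fix x y assume x: "x \<in> C 0" and y: "y \<in> C 1"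
        have "x \<in> V - C 1" using x disj C0V by auto
        hence "(\<forall>m\<in>C 1. E x m) \<or> (\<forall>m\<in>C 1. \<not> E x m)" using M1 unfolding is_module_def by blast
        thus "E x y" using a1 x c1 y by auto
      qed
      thus "\<exists>M1\<in>md_children V E N. \<exists>M2\<in>md_children V E N. M1 \<noteq> M2 \<and> quotient_adj E M1 M2"
        using c0 c1 d01 by blast
      have "\<not> quotient_adj E (C 0) (C 2)" using c0 c2 ne02 unfolding quotient_adj_def by auto
      thus "\<exists>M1\<in>md_children V E N. \<exists>M2\<in>md_children V E N. M1 \<noteq> M2 \<and> \<not> quotient_adj E M1 M2"
        using c0 c2 d02 by blast
    qed
    hence "card (md_children V E N) \<le> k" using km unfolding k_modular_def by auto
    thus False using nle \<open>\<not> length xs \<le> k + 3\<close> n_def by auto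
  qed
qed

end
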